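(* Let $\mathbf A$ be a WHB-algebra. The map $\Theta$ sending $Y\in DC(X(\mathbf A))$ to $\Theta(Y)=\{(a,b)\in A\times A\colon \sigma_{\mathbf A}(a)\cap Y=\sigma_{\mathbf A}(b)\cap Y\}$ is a bijection from $DC(X(\mathbf A))$ onto the congruence lattice $\mathrm{Con}(\mathbf A)$, with inverse $\theta\mapsto\Theta^{-1}(\theta)=\{P\in X(\mathbf A)\colon \text{for all }(a,b)\in\theta,\ a\in P\Rightarrow b\in P\}$; these maps reverse inclusion, so they constitute a dual lattice isomorphism between $\mathrm{Con}(\mathbf A)$ and $DC(X(\mathbf A))$.
   Context: A WHB-algebra is an algebra $(A,\wedge,\vee,\to,\leftarrow,0,1)$ such that $(A,\wedge,\vee,0,1)$ is a bounded distributive lattice and for all $a,b,c\in A$: $a\to a=1$; $a\to(b\wedge c)=(a\to b)\wedge(a\to c)$; $(a\vee b)\to c=(a\to c)\wedge(b\to c)$; $(a\to b)\wedge(b\to c)\le a\to c$; $a\leftarrow a=0$; $(a\vee b)\leftarrow c=(a\leftarrow c)\vee(b\leftarrow c)$; $a\leftarrow(b\wedge c)=(a\leftarrow b)\vee(a\leftarrow c)$; $a\leftarrow c\le(a\leftarrow b)\vee(b\leftarrow c)$; $a\wedge((a\to b)\leftarrow 0)\le b$; $a\le b\vee(1\to(a\leftarrow b))$. $X(\mathbf A)$ is the set of prime filters of $\mathbf A$, $\sigma_{\mathbf A}(a)=\{P\in X(\mathbf A)\colon a\in P\}$, and $\tau_{\mathbf A}$ is the topology on $X(\mathbf A)$ with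 subbase $\{\sigma_{\mathbf A}(a)\colon a\in A\}\cup\{X(\mathbf A)\setminus\sigma_{\mathbf A}(a)\colon a\in A\}$. Relations on $X(\mathbf A)$: $(P,Q)\in R_{\mathbf A}$ iff for all $a,b$, $a\to b\in P$ and $a\in Q$ imply $b\in Q$; $(P,Q)\in S_{\mathbf A}$ iff for all $a,b$, $a\in Q$ and $b\notin Q$ imply $a\leftarrow b\in P$. $DC(X(\mathbf A))$ is the set of $\tau_{\mathbf A}$-closed sets $Y\subseteq X(\mathbf A)$ such that $P\in Y$ and $(P,Q)\in R_{\mathbf A}$ imply $Q\in Y$, and $P\in Y$ and $(P,Q)\in S_{\mathbf A}$ imply $Q\in Y$, ordered by inclusion. *)

theory Defs
  imports "HOL-Analysis.Analysis"
begin

text \<open>An algebra (A, meet, join, imp, coimp, zero, one) is given by a carrier set A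
  together with its operations; imp is the arrow a \<rightarrow> b and coimp is a \<leftarrow> b.\<close>

definition bdl_le :: "('a \<Rightarrow> 'a \<Rightarrow> 'a) \<Rightarrow> 'a \<Rightarrow> 'a \<Rightarrow> bool" where
  "bdl_le meet a b \<longleftrightarrow> meet a b = a"

definition bounded_distrib_lattice_on ::
  "'a set \<Rightarrow> ('a \<Rightarrow> 'a \<Rightarrow> 'a) \<Rightarrow> ('a \<Rightarrow> 'a \<Rightarrow> 'a) \<Rightarrow> 'a \<Rightarrow> 'a \<Rightarrow> bool" where
  "bounded_distrib_lattice_on A meet join zero one \<longleftrightarrow>
     zero \<in> A \<and> one \<in> A \<and>
     (\<forall>a\<in>A. \<forall>b\<in>A. meet a b \<in> A \<and> join a b \<in> A) \<and>
     (\<forall>a\<in>A. \<forall>b\<in>A. meet a b = meet b a \<and> join a b = join b a) \<and>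
     (\<forall>a\<in>A. \<forall>b\<in>A. \<forall>c\<in>A. meet (meet a b) c = meet a (meet b c) \<and>
                         join (join a b) c = join a (join b c)) \<and>
     (\<forall>a\<in>A. \<forall>b\<in>A. meet a (join a b) = a \<and> join a (meet a b) = a) \<and>
     (\<forall>a\<in>A. \<forall>b\<in>A. \<forall>c\<in>A. meet a (join b c) = join (meet a b) (meet a c)) \<and>
     (\<forall>a\<in>A. meet zero a = zero \<and> join one a = one)"

definition whb_algebra ::
  "'a set \<Rightarrow> ('a \<Rightarrow> 'a \<Rightarrow> 'a) \<Rightarrow> ('a \<Rightarrow> 'a \<Rightarrow> 'a) \<Rightarrow> ('a \<Rightarrow> 'a \<Rightarrow> 'a) \<Rightarrow>
   ('a \<Rightarrow> 'a \<Rightarrow> 'a) \<Rightarrow> 'a \<Rightarrow> 'a \<Rightarrow> bool" where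
  "whb_algebra A meet join imp coimp zero one \<longleftrightarrow>
     bounded_distrib_lattice_on A meet join zero one \<and>
     (\<forall>a\<in>A. \<forall>b\<in>A. imp a b \<in> A \<and> coimp a b \<in> A) \<and>
     (\<forall>a\<in>A. imp a a = one) \<and>
     (\<forall>a\<in>A. \<forall>b\<in>A. \<forall>c\<in>A. imp a (meet b c) = meet (imp a b) (imp a c)) \<and>
     (\<forall>a\<in>A. \<forall>b\<in>A. \<forall>c\<in>A. imp (join a b) c = meet (imp a c) (imp b c)) \<and>
     (\<forall>a\<in>A. \<forall>b\<in>A. \<forall>c\<in>A. bdl_le meet (meet (imp a b) (imp b c)) (imp a c)) \<and>
     (\<forall>a\<in>A. coimp a a = zero) \<and>
     (\<forall>a\<in>A. \<forall>b\<in>A. \<forall>c\<in>A. coimp (join a b) c = join (coimp a c) (coimp b c)) \<and>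
     (\<forall>a\<in>A. \<forall>b\<in>A. \<forall>c\<in>A. coimp a (meet b c) = join (coimp a b) (coimp a c)) \<and>
     (\<forall>a\<in>A. \<forall>b\<in>A. \<forall>c\<in>A. bdl_le meet (coimp a c) (join (coimp a b) (coimp b c))) \<and>
     (\<forall>a\<in>A. \<forall>b\<in>A. bdl_le meet (meet a (coimp (imp a b) zero)) b) \<and>
     (\<forall>a\<in>A. \<forall>b\<in>A. bdl_le meet a (join b (imp one (coimp a b))))"

definition prime_filters ::
  "'a set \<Rightarrow> ('a \<Rightarrow> 'a \<Rightarrow> 'a) \<Rightarrow> ('a \<Rightarrow> 'a \<Rightarrow> 'a) \<Rightarrow> 'a set set" where
  "prime_filters A meet join = {P. P \<subseteq> A \<and> P \<noteq> {} \<and> P \<noteq> A \<and>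
      (\<forall>a\<in>P. \<forall>b\<in>A. bdl_le meet a b \<longrightarrow> b \<in> P) \<and>
      (\<forall>a\<in>P. \<forall>b\<in>P. meet a b \<in> P) \<and>
      (\<forall>a\<in>A. \<forall>b\<in>A. join a b \<in> P \<longrightarrow> a \<in> P \<or> b \<in> P)}"

definition sigmaA ::
  "'a set \<Rightarrow> ('a \<Rightarrow> 'a \<Rightarrow> 'a) \<Rightarrow> ('a \<Rightarrow> 'a \<Rightarrow> 'a) \<Rightarrow> 'a \<Rightarrow> 'a set set" where
  "sigmaA A meet join a = {P \<in> prime_filters A meet join. a \<in> P}"

definition tauA ::
  "'a set \<Rightarrow> ('a \<Rightarrow> 'a \<Rightarrow> 'a) \<Rightarrow> ('a \<Rightarrow> 'a \<Rightarrow> 'a) \<Rightarrow> 'a set topology" where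
  "tauA A meet join = subtopology
     (topology_generated_by
        ((\<lambda>a. sigmaA A meet join a) ` A \<union>
         (\<lambda>a. prime_filters A meet join - sigmaA A meet join a) ` A))
     (prime_filters A meet join)"

definition relR ::
  "'a set \<Rightarrow> ('a \<Rightarrow> 'a \<Rightarrow> 'a) \<Rightarrow> ('a \<Rightarrow> 'a \<Rightarrow> 'a) \<Rightarrow> ('a \<Rightarrow> 'a \<Rightarrow> 'a) \<Rightarrow> ('a set \<times> 'a set) set" where
  "relR A meet join imp = {(P, Q). P \<in> prime_filters A meet join \<and> Q \<in> prime_filters A meet join \<and>
      (\<forall>a\<in>A. \<forall>b\<in>A. imp a b \<in> P \<and> a \<in> Q \<longrightarrow> b \<in> Q)}"

definition relS ::
  "'a set \<Rightarrow> ('a \<Rightarrow> 'a \<Rightarrow> 'a) \<Rightarrow> ('a \<Rightarrow> 'a \<Rightarrow> 'a) \<Rightarrow> ('a \<Rightarrow> 'a \<Rightarrow> 'a) \<Rightarrow> ('a set \<times> 'a set) set" where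
  "relS A meet join coimp = {(P, Q). P \<in> prime_filters A meet join \<and> Q \<in> prime_filters A meet join \<and>
      (\<forall>a\<in>A. \<forall>b\<in>A. a \<in> Q \<and> b \<notin> Q \<longrightarrow> coimp a b \<in> P)}"

definition DC ::
  "'a set \<Rightarrow> ('a \<Rightarrow> 'a \<Rightarrow> 'a) \<Rightarrow> ('a \<Rightarrow> 'a \<Rightarrow> 'a) \<Rightarrow> ('a \<Rightarrow> 'a \<Rightarrow> 'a) \<Rightarrow>
   ('a \<Rightarrow> 'a \<Rightarrow> 'a) \<Rightarrow> 'a set set set" where
  "DC A meet join imp coimp = {Y. closedin (tauA A meet join) Y \<and>
      (\<forall>P Q. P \<in> Y \<and> (P, Q) \<in> relR A meet join imp \<longrightarrow> Q \<in> Y) \<and>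
      (\<forall>P Q. P \<in> Y \<and> (P, Q) \<in> relS A meet join coimp \<longrightarrow> Q \<in> Y)}"

text \<open>Congruences: equivalence relations on A compatible with all operations
  (the constants are trivially compatible).\<close>
definition Con ::
  "'a set \<Rightarrow> ('a \<Rightarrow> 'a \<Rightarrow> 'a) \<Rightarrow> ('a \<Rightarrow> 'a \<Rightarrow> 'a) \<Rightarrow> ('a \<Rightarrow> 'a \<Rightarrow> 'a) \<Rightarrow>
   ('a \<Rightarrow> 'a \<Rightarrow> 'a) \<Rightarrow> ('a \<times> 'a) set set" where
  "Con A meet join imp coimp = {\<theta>. equiv A \<theta> \<and>
      (\<forall>a b c d. (a, b) \<in> \<theta> \<and> (c, d) \<in> \<theta> \<longrightarrow>
         (meet a c, meet b d) \<in> \<theta> \<and> (join a c, join b d) \<in> \<theta> \<and>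
         (imp a c, imp b d) \<in> \<theta> \<and> (coimp a c, coimp b d) \<in> \<theta>)}"

definition ThetaMap ::
  "'a set \<Rightarrow> ('a \<Rightarrow> 'a \<Rightarrow> 'a) \<Rightarrow> ('a \<Rightarrow> 'a \<Rightarrow> 'a) \<Rightarrow> 'a set set \<Rightarrow> ('a \<times> 'a) set" where
  "ThetaMap A meet join Y = {(a, b) \<in> A \<times> A. sigmaA A meet join a \<inter> Y = sigmaA A meet join b \<inter> Y}"

definition ThetaInv ::
  "'a set \<Rightarrow> ('a \<Rightarrow> 'a \<Rightarrow> 'a) \<Rightarrow> ('a \<Rightarrow> 'a \<Rightarrow> 'a) \<Rightarrow> ('a \<times> 'a) set \<Rightarrow> 'a set set" where
  "ThetaInv A meet join \<theta> = {P \<in> prime_filters A meet join. \<forall>(a, b) \<in> \<theta>. a \<in> P \<longrightarrow> b \<in> P}"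

end

theory Submission
  imports Defs
begin



locale bdl =
  fixes A :: "'a set" and meet join :: "'a \<Rightarrow> 'a \<Rightarrow> 'a" and zero one :: 'a
  assumes bdl: "bounded_distrib_lattice_on A meet join zero one"
begin

lemma zero_in[simp]: "zero \<in> A" and one_in[simp]: "one \<in> A"
  using bdl unfolding bounded_distrib_lattice_on_def by auto

lemma meet_cl[simp]: "a \<in> A \<Longrightarrow> b \<in> A \<Longrightarrow> meet a b \<in> A"
  and join_cl[simp]: "a \<in> A \<Longrightarrow> b \<in> A \<Longrightarrow> join a b \<in> A"
  using bdl unfolding bounded_distrib_lattice_on_def by auto

lemma meet_comm: "a \<in> A \<Longrightarrow> b \<in> A \<Longrightarrow> meet a b = meet b a"
  and join_comm: "a \<in> A \<Longrightarrow> b \<in> A \<Longrightarrow> join a b = join b a"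
  using bdl unfolding bounded_distrib_lattice_on_def by auto

lemma meet_assoc: "a \<in> A \<Longrightarrow> b \<in> A \<Longrightarrow> c \<in> A \<Longrightarrow> meet (meet a b) c = meet a (meet b c)"
  and join_assoc: "a \<in> A \<Longrightarrow> b \<in> A \<Longrightarrow> c \<in> A \<Longrightarrow> join (join a b) c = join a (join b c)"
  using bdl unfolding bounded_distrib_lattice_on_def by auto

lemma absorb1: "a \<in> A \<Longrightarrow> b \<in> A \<Longrightarrow> meet a (join a b) = a"
  and absorb2: "a \<in> A \<Longrightarrow> b \<in> A \<Longrightarrow> join a (meet a b) = a"
  using bdl unfolding bounded_distrib_lattice_on_def by auto

lemma distrib: "a \<in> A \<Longrightarrow> b \<in> A \<Longrightarrow> c \<in> A \<Longrightarrow> meet a (join b c) = join (meet a b) (meet a c)"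
  using bdl unfolding bounded_distrib_lattice_on_def by auto

lemma meet_zero: "a \<in> A \<Longrightarrow> meet zero a = zero"
  and join_one: "a \<in> A \<Longrightarrow> join one a = one"
  using bdl unfolding bounded_distrib_lattice_on_def by auto

lemma meet_idem: "a \<in> A \<Longrightarrow> meet a a = a"
  using absorb1[of a "meet a zero"] absorb2[of a zero] by simp

lemma join_idem: "a \<in> A \<Longrightarrow> join a a = a"
  using absorb2[of a "join a zero"] absorb1[of a zero] by simp

lemma join_one': "a \<in> A \<Longrightarrow> join a one = one"
  using join_comm[of a one] join_one[of a] by simp

lemma meet_one: "a \<in> A \<Longrightarrow> meet a one = a"
  using absorb1[of a one] join_one'[of a] by simp

lemma meet_one': "a \<in> A \<Longrightarrow> meet one a = a"
  using meet_comm[of one a] meet_one[of a] by simp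

lemma meet_zero': "a \<in> A \<Longrightarrow> meet a zero = zero"
  using meet_comm[of a zero] meet_zero[of a] by simp

lemma join_zero': "a \<in> A \<Longrightarrow> join a zero = a"
  using absorb2[of a zero] meet_zero'[of a] by simp

lemma join_zero: "a \<in> A \<Longrightarrow> join zero a = a"
  using join_comm[of zero a] join_zero'[of a] by simp

lemma absorb3: "a \<in> A \<Longrightarrow> b \<in> A \<Longrightarrow> join (meet a b) a = a"
  using join_comm[of "meet a b" a] absorb2[of a b] by simp

lemma absorb4: "a \<in> A \<Longrightarrow> b \<in> A \<Longrightarrow> meet (join a b) a = a"
  using meet_comm[of "join a b" a] absorb1[of a b] by simp

lemma distrib2: "a \<in> A \<Longrightarrow> b \<in> A \<Longrightarrow> c \<in> A \<Longrightarrow> join a (meet b c) = meet (join a b) (join a c)"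
proof -
  assume a: "a \<in> A" and b: "b \<in> A" and c: "c \<in> A"
  have "meet (join a b) (join a c) = join (meet (join a b) a) (meet (join a b) c)"
    using a b c by (simp add: distrib)
  also have "\<dots> = join a (meet (join a b) c)" using a b by (simp add: absorb4)
  also have "meet (join a b) c = join (meet c a) (meet c b)"
    using a b c meet_comm[of "join a b" c] distrib[of c a b] by simp
  also have "join a (join (meet c a) (meet c b)) = join (join a (meet c a)) (meet c b)"
    using a b c by (simp add: join_assoc)
  also have "join a (meet c a) = a" using a c meet_comm[of c a] absorb2[of a c] by simp
  finally show ?thesis using b c meet_comm[of c b] by simp
qed

lemma dual: "bounded_distrib_lattice_on A join meet one zero"
  unfolding bounded_distrib_lattice_on_def
  using join_comm meet_comm join_assoc meet_assoc absorb1 absorb2 distrib2 join_one' meet_zero' join_one meet_zero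
  by simp

definition le where "le x y \<longleftrightarrow> meet x y = x"

lemma le_alt: "x \<in> A \<Longrightarrow> y \<in> A \<Longrightarrow> le x y \<longleftrightarrow> join x y = y"
proof -
  assume x: "x \<in> A" and y: "y \<in> A"
  show ?thesis
  proof
    assume "le x y" then have "meet x y = x" by (simp add: le_def)
    then have "join x y = join (meet y x) y" using meet_comm[OF x y] by simp
    also have "\<dots> = y" using absorb3[OF y x] by simp
    finally show "join x y = y" .
  next
    assume "join x y = y"
    then show "le x y" unfolding le_def using absorb1[OF x y] by simp
  qed
qed

lemma le_refl: "x \<in> A \<Longrightarrow> le x x" by (simp add: le_def meet_idem)
lemma le_trans: "x \<in> A \<Longrightarrow> y \<in> A \<Longrightarrow> z \<in> A \<Longrightarrow> le x y \<Longrightarrow> le y z \<Longrightarrow> le x z"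
  unfolding le_def
proof -
  assume x: "x \<in> A" and y: "y \<in> A" and z: "z \<in> A" and h1: "meet x y = x" and h2: "meet y z = y"
  have "meet x z = meet (meet x y) z" using h1 by simp
  also have "\<dots> = meet x (meet y z)" using meet_assoc[OF x y z] .
  also have "\<dots> = x" using h1 h2 by simp
  finally show "meet x z = x" .
qed
lemma le_meet1: "x \<in> A \<Longrightarrow> y \<in> A \<Longrightarrow> le (meet x y) x"
  unfolding le_def using meet_assoc[of x y x] meet_comm[of y x] meet_assoc[of x x y] meet_idem[of x] by simp
lemma le_meet2: "x \<in> A \<Longrightarrow> y \<in> A \<Longrightarrow> le (meet x y) y"
  unfolding le_def using meet_assoc[of x y y] meet_idem[of y] by simp
lemma le_meetI: "x \<in> A \<Longrightarrow> y \<in> A \<Longrightarrow> z \<in> A \<Longrightarrow> le x y \<Longrightarrow> le x z \<Longrightarrow> le x (meet y z)"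
  unfolding le_def using meet_assoc[of x y z] by simp
lemma le_join1: "x \<in> A \<Longrightarrow> y \<in> A \<Longrightarrow> le x (join x y)"
  unfolding le_def by (simp add: absorb1)
lemma le_join2: "x \<in> A \<Longrightarrow> y \<in> A \<Longrightarrow> le y (join x y)"
  unfolding le_def using absorb1[of y x] join_comm[of x y] by simp
lemma le_one: "x \<in> A \<Longrightarrow> le x one" by (simp add: le_def meet_one)
lemma le_zero: "x \<in> A \<Longrightarrow> le zero x" by (simp add: le_def meet_zero)

abbreviation "X \<equiv> prime_filters A meet join"

lemma bdl_le_eq: "bdl_le meet = le" by (auto simp: bdl_le_def le_def fun_eq_iff)

lemma pfD:
  assumes "P \<in> X"
  shows "P \<subseteq> A" "P \<noteq> {}" "P \<noteq> A" "\<And>a b. a \<in> P \<Longrightarrow> b \<in> A \<Longrightarrow> le a b \<Longrightarrow> b \<in> P"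
    "\<And>a b. a \<in> P \<Longrightarrow> b \<in> P \<Longrightarrow> meet a b \<in> P"
    "\<And>a b. a \<in> A \<Longrightarrow> b \<in> A \<Longrightarrow> join a b \<in> P \<Longrightarrow> a \<in> P \<or> b \<in> P"
  using assms unfolding prime_filters_def bdl_le_eq by blast+

lemma pf_one: "P \<in> X \<Longrightarrow> one \<in> P"
proof -
  assume P: "P \<in> X"
  obtain p where p: "p \<in> P" using pfD(2)[OF P] by blast
  have pA: "p \<in> A" using pfD(1)[OF P] p by blast
  show ?thesis by (rule pfD(4)[OF P p one_in le_one[OF pA]])
qed

lemma pf_zero: "P \<in> X \<Longrightarrow> zero \<notin> P"
proof
  assume P: "P \<in> X" and z: "zero \<in> P"
  have "A \<subseteq> P"
  proof
    fix x assume x: "x \<in> A"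
    show "x \<in> P" using pfD(4)[OF P z x le_zero[OF x]] .
  qed
  then show False using pfD(1,3)[OF P] by blast
qed

lemma pf_meet: "P \<in> X \<Longrightarrow> a \<in> A \<Longrightarrow> b \<in> A \<Longrightarrow> meet a b \<in> P \<longleftrightarrow> a \<in> P \<and> b \<in> P"
proof -
  assume P: "P \<in> X" and a: "a \<in> A" and b: "b \<in> A"
  show ?thesis
  proof
    assume m: "meet a b \<in> P"
    show "a \<in> P \<and> b \<in> P"
      using pfD(4)[OF P m a le_meet1[OF a b]] pfD(4)[OF P m b le_meet2[OF a b]] by (rule conjI)
  next
    assume "a \<in> P \<and> b \<in> P"
    then show "meet a b \<in> P" using pfD(5)[OF P] by blast
  qed
qed

lemma pf_join: "P \<in> X \<Longrightarrow> a \<in> A \<Longrightarrow> b \<in> A \<Longrightarrow> join a b \<in> P \<longleftrightarrow> a \<in> P \<or> b \<in> P"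
proof -
  assume P: "P \<in> X" and a: "a \<in> A" and b: "b \<in> A"
  show ?thesis
  proof
    assume m: "join a b \<in> P"
    show "a \<in> P \<or> b \<in> P" by (rule pfD(6)[OF P a b m])
  next
    assume "a \<in> P \<or> b \<in> P"
    then show "join a b \<in> P"
    proof
      assume "a \<in> P" then show ?thesis using pfD(4)[OF P _ _ le_join1[OF a b]] a b by simp
    next
      assume "b \<in> P" then show ?thesis using pfD(4)[OF P _ _ le_join2[OF a b]] a b by simp
    qed
  qed
qed

end



context bdl begin

lemma R_lemma:
  assumes imp_cl: "\<And>x y. x \<in> A \<Longrightarrow> y \<in> A \<Longrightarrow> imp x y \<in> A"
    and imp_refl: "\<And>x. x \<in> A \<Longrightarrow> imp x x = one"
    and imp_meet: "\<And>x y z. x \<in> A \<Longrightarrow> y \<in> A \<Longrightarrow> z \<in> A \<Longrightarrow> imp x (meet y z) = meet (imp x y) (imp x z)"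
    and imp_join: "\<And>x y z. x \<in> A \<Longrightarrow> y \<in> A \<Longrightarrow> z \<in> A \<Longrightarrow> imp (join x y) z = meet (imp x z) (imp y z)"
    and imp_trans: "\<And>x y z. x \<in> A \<Longrightarrow> y \<in> A \<Longrightarrow> z \<in> A \<Longrightarrow> le (meet (imp x y) (imp y z)) (imp x z)"
    and P1: "one \<in> P" and Pup: "\<And>x y. x \<in> P \<Longrightarrow> y \<in> A \<Longrightarrow> le x y \<Longrightarrow> y \<in> P"
    and Pmeet: "\<And>x y. x \<in> P \<Longrightarrow> y \<in> P \<Longrightarrow> meet x y \<in> P" and PA: "P \<subseteq> A"
    and a: "a \<in> A" and b: "b \<in> A" and ab: "imp a b \<notin> P"
  shows "\<exists>Q \<in> X. (\<forall>x\<in>A. \<forall>y\<in>A. imp x y \<in> P \<and> x \<in> Q \<longrightarrow> y \<in> Q) \<and> a \<in> Q \<and> b \<notin> Q"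
proof -
  have imp_mono: "le (imp x y) (imp x z)" if "x \<in> A" "y \<in> A" "z \<in> A" "le y z" for x y z
    using that imp_meet[of x y z] unfolding le_def by (metis imp_cl le_def le_meet1)
  have imp_anti: "le (imp y z) (imp x z)" if "x \<in> A" "y \<in> A" "z \<in> A" "le x y" for x y z
  proof -
    have "join x y = y" using that le_alt by blast
    then have "imp y z = meet (imp x z) (imp y z)" using imp_join[of x y z] that by simp
    then show ?thesis unfolding le_def using that imp_cl meet_comm by metis
  qed
  have Ptrans: "imp x z \<in> P" if "x \<in> A" "y \<in> A" "z \<in> A" "imp x y \<in> P" "imp y z \<in> P" for x y z
    using Pup[OF Pmeet[OF that(4,5)] _ imp_trans[OF that(1-3)]] imp_cl that by blast
  define cf where "cf F \<longleftrightarrow> F \<subseteq> A \<and> a \<in> F \<and> b \<notin> F \<and> (\<forall>x\<in>F. \<forall>y\<in>A. le x y \<longrightarrow> y \<in> F)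
     \<and> (\<forall>x\<in>F. \<forall>y\<in>F. meet x y \<in> F) \<and> (\<forall>x\<in>F. \<forall>y\<in>A. imp x y \<in> P \<longrightarrow> y \<in> F)" for F
  define F0 where "F0 = {y \<in> A. imp a y \<in> P}"
  have "cf F0"
    unfolding cf_def F0_def
  proof (intro conjI ballI impI)
    show "a \<in> {y \<in> A. imp a y \<in> P}" using a imp_refl P1 by simp
    show "b \<notin> {y \<in> A. imp a y \<in> P}" using ab by simp
    fix x y assume x: "x \<in> {y \<in> A. imp a y \<in> P}"
    { assume "y \<in> A" "le x y" then show "y \<in> {y \<in> A. imp a y \<in> P}"
        using x imp_mono[of a x y] Pup imp_cl a by auto }
    { assume "y \<in> {y \<in> A. imp a y \<in> P}" then show "meet x y \<in> {y \<in> A. imp a y \<in> P}"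
        using x imp_meet[of a x y] Pmeet a by auto }
    { assume "y \<in> A" "imp x y \<in> P" then show "y \<in> {y \<in> A. imp a y \<in> P}"
        using x Ptrans[of a x y] a by auto }
  qed auto
  have "\<exists>M\<in>Collect cf. \<forall>Y\<in>Collect cf. M \<subseteq> Y \<longrightarrow> Y = M"
  proof (rule subset_Zorn_nonempty)
    show "Collect cf \<noteq> {}" using \<open>cf F0\<close> by blast
    fix C assume C: "C \<noteq> {}" "subset.chain (Collect cf) C"
    then have Ccf: "\<And>F. F \<in> C \<Longrightarrow> cf F" and Cch: "\<And>F G. F \<in> C \<Longrightarrow> G \<in> C \<Longrightarrow> F \<subseteq> G \<or> G \<subseteq> F"
      unfolding subset.chain_def by auto
    show "\<Union>C \<in> Collect cf"
      unfolding mem_Collect_eq cf_def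
    proof (intro conjI ballI impI)
      show "\<Union>C \<subseteq> A" using Ccf unfolding cf_def by blast
      show "a \<in> \<Union>C" using Ccf C(1) unfolding cf_def by blast
      show "b \<notin> \<Union>C" using Ccf unfolding cf_def by blast
      fix x y assume x: "x \<in> \<Union>C"
      then obtain F where F: "F \<in> C" "x \<in> F" by blast
      { assume "y \<in> A" "le x y" then show "y \<in> \<Union>C" using F Ccf[OF F(1)] unfolding cf_def by blast }
      { assume "y \<in> A" "imp x y \<in> P" then show "y \<in> \<Union>C" using F Ccf[OF F(1)] unfolding cf_def by blast }
      { assume "y \<in> \<Union>C"
        then obtain G where G: "G \<in> C" "y \<in> G" by blast
        show "meet x y \<in> \<Union>C"
        proof (cases "F \<subseteq> G")
          case True then show ?thesis using F G Ccf[OF G(1)] unfolding cf_def by blast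
        next
          case False then have "G \<subseteq> F" using Cch F G by blast
          then show ?thesis using F G Ccf[OF F(1)] unfolding cf_def by blast
        qed }
    qed
  qed
  then obtain M where M: "cf M" and Mmax: "\<And>Y. cf Y \<Longrightarrow> M \<subseteq> Y \<Longrightarrow> Y = M" by blast
  have MA: "M \<subseteq> A" and aM: "a \<in> M" and bM: "b \<notin> M"
    and Mup: "\<And>x y. x \<in> M \<Longrightarrow> y \<in> A \<Longrightarrow> le x y \<Longrightarrow> y \<in> M"
    and Mmeet: "\<And>x y. x \<in> M \<Longrightarrow> y \<in> M \<Longrightarrow> meet x y \<in> M"
    and Mimp: "\<And>x y. x \<in> M \<Longrightarrow> y \<in> A \<Longrightarrow> imp x y \<in> P \<Longrightarrow> y \<in> M"
    using M unfolding cf_def by blast+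
  have key: "\<exists>f\<in>M. imp (meet f x) b \<in> P" if x: "x \<in> A" "x \<notin> M" for x
  proof (rule ccontr)
    assume nb: "\<not> ?thesis"
    define G where "G = {z \<in> A. \<exists>f\<in>M. imp (meet f x) z \<in> P}"
    have one_imp: "imp (meet f x) z \<in> P" if "f \<in> A" "z \<in> A" "le (meet f x) z" for f z
    proof -
      have "le (imp z z) (imp (meet f x) z)" using imp_anti that x by simp
      then have "le one (imp (meet f x) z)" using imp_refl that by simp
      then show ?thesis using Pup[OF P1] imp_cl that x by simp
    qed
    have "cf G" unfolding cf_def
    proof (intro conjI ballI impI)
      show "G \<subseteq> A" unfolding G_def by blast
      show "a \<in> G" unfolding G_def using aM a one_imp[of a a] MA x le_meet1 by blast
      show "b \<notin> G" unfolding G_def using nb by blast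
      fix u v assume u: "u \<in> G"
      then obtain f where f: "f \<in> M" "u \<in> A" "imp (meet f x) u \<in> P" unfolding G_def by blast
      have fA: "f \<in> A" using f MA by blast
      { assume v: "v \<in> A" "le u v"
        have "imp (meet f x) v \<in> P" using Pup[OF f(3) _ imp_mono[of "meet f x" u v]] imp_cl f fA x v by simp
        then show "v \<in> G" unfolding G_def using f v by auto }
      { assume v: "v \<in> A" "imp u v \<in> P"
        then show "v \<in> G" unfolding G_def using f fA x Ptrans[of "meet f x" u v] by auto }
      { assume "v \<in> G"
        then obtain g where g: "g \<in> M" "v \<in> A" "imp (meet g x) v \<in> P" unfolding G_def by blast
        have gA: "g \<in> A" using g MA by blast
        define h where "h = meet f g"
        have hM: "h \<in> M" unfolding h_def using f g Mmeet by blast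
        have hA: "h \<in> A" unfolding h_def using fA gA by simp
        have l1: "le (meet h x) (meet f x)" unfolding h_def using fA gA x
          by (meson le_meet1 le_meet2 le_meetI le_trans meet_cl)
        have l2: "le (meet h x) (meet g x)" unfolding h_def using fA gA x
          by (meson le_meet1 le_meet2 le_meetI le_trans meet_cl)
        have "imp (meet h x) u \<in> P" using Pup[OF f(3)] imp_anti[OF _ _ _ l1] hA fA x f(2) imp_cl by simp
        moreover have "imp (meet h x) v \<in> P" using Pup[OF g(3)] imp_anti[OF _ _ _ l2] hA gA x g(2) imp_cl by simp
        ultimately have "imp (meet h x) (meet u v) \<in> P" using imp_meet[of "meet h x" u v] hA x f(2) g(2) Pmeet by simp
        then show "meet u v \<in> G" unfolding G_def using hM f(2) g(2) by auto }
    qed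
    moreover have "M \<subseteq> G" unfolding G_def using MA one_imp x le_meet1 by blast
    ultimately have "G = M" using Mmax by blast
    moreover have "x \<in> G" unfolding G_def using one_imp x aM MA le_meet2 by blast
    ultimately show False using x by blast
  qed
  have prime: "x \<in> M \<or> y \<in> M" if xy: "x \<in> A" "y \<in> A" "join x y \<in> M" for x y
  proof (rule ccontr)
    assume "\<not> ?thesis"
    then obtain f g where f: "f \<in> M" "imp (meet f x) b \<in> P" and g: "g \<in> M" "imp (meet g y) b \<in> P"
      using key xy by blast
    have fA: "f \<in> A" and gA: "g \<in> A" using f g MA by auto
    define h where "h = meet f g"
    have hM: "h \<in> M" unfolding h_def using f g Mmeet by blast
    have hA: "h \<in> A" unfolding h_def using fA gA by simp
    have l1: "le (meet h x) (meet f x)" unfolding h_def using fA gA xy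
      by (meson le_meet1 le_meet2 le_meetI le_trans meet_cl)
    have l2: "le (meet h y) (meet g y)" unfolding h_def using fA gA xy
      by (meson le_meet1 le_meet2 le_meetI le_trans meet_cl)
    have i1: "imp (meet h x) b \<in> P" using Pup[OF f(2)] imp_anti[OF _ _ _ l1] hA fA xy b imp_cl by simp
    have i2: "imp (meet h y) b \<in> P" using Pup[OF g(2)] imp_anti[OF _ _ _ l2] hA gA xy b imp_cl by simp
    have "imp (join (meet h x) (meet h y)) b \<in> P" using imp_join[of "meet h x" "meet h y" b] i1 i2 Pmeet hA xy b by simp
    then have "imp (meet h (join x y)) b \<in> P" using distrib hA xy by simp
    moreover have "meet h (join x y) \<in> M" using Mmeet hM xy by blast
    ultimately show False using Mimp b bM by blast
  qed
  have "M \<in> X" unfolding prime_filters_def bdl_le_eq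
    using MA aM bM b Mup Mmeet prime by blast
  then show ?thesis using Mimp aM bM by blast
qed

end



locale whb =
  fixes A :: "'a set" and meet join imp coimp :: "'a \<Rightarrow> 'a \<Rightarrow> 'a" and zero one :: 'a
  assumes whb: "whb_algebra A meet join imp coimp zero one"

sublocale whb \<subseteq> bdl A meet join zero one
  using whb unfolding whb_algebra_def by unfold_locales simp

context whb begin

lemma imp_cl: "x \<in> A \<Longrightarrow> y \<in> A \<Longrightarrow> imp x y \<in> A"
  using whb unfolding whb_algebra_def bdl_le_eq by simp

lemma coimp_cl: "x \<in> A \<Longrightarrow> y \<in> A \<Longrightarrow> coimp x y \<in> A"
  using whb unfolding whb_algebra_def bdl_le_eq by simp

lemma imp_refl: "x \<in> A \<Longrightarrow> imp x x = one"
  using whb unfolding whb_algebra_def bdl_le_eq by simp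

lemma coimp_refl: "x \<in> A \<Longrightarrow> coimp x x = zero"
  using whb unfolding whb_algebra_def bdl_le_eq by simp

lemma imp_meet: "x \<in> A \<Longrightarrow> y \<in> A \<Longrightarrow> z \<in> A \<Longrightarrow> imp x (meet y z) = meet (imp x y) (imp x z)"
  using whb unfolding whb_algebra_def bdl_le_eq by simp

lemma imp_join: "x \<in> A \<Longrightarrow> y \<in> A \<Longrightarrow> z \<in> A \<Longrightarrow> imp (join x y) z = meet (imp x z) (imp y z)"
  using whb unfolding whb_algebra_def bdl_le_eq by simp

lemma imp_trans: "x \<in> A \<Longrightarrow> y \<in> A \<Longrightarrow> z \<in> A \<Longrightarrow> le (meet (imp x y) (imp y z)) (imp x z)"
  using whb unfolding whb_algebra_def bdl_le_eq by simp

lemma coimp_join: "x \<in> A \<Longrightarrow> y \<in> A \<Longrightarrow> z \<in> A \<Longrightarrow> coimp (join x y) z = join (coimp x z) (coimp y z)"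
  using whb unfolding whb_algebra_def bdl_le_eq by simp

lemma coimp_meet: "x \<in> A \<Longrightarrow> y \<in> A \<Longrightarrow> z \<in> A \<Longrightarrow> coimp x (meet y z) = join (coimp x y) (coimp x z)"
  using whb unfolding whb_algebra_def bdl_le_eq by simp

lemma coimp_trans: "x \<in> A \<Longrightarrow> y \<in> A \<Longrightarrow> z \<in> A \<Longrightarrow> le (coimp x z) (join (coimp x y) (coimp y z))"
  using whb unfolding whb_algebra_def bdl_le_eq by simp

lemma R_ex:
  assumes P: "P \<in> X" and a: "a \<in> A" and b: "b \<in> A" and ab: "imp a b \<notin> P"
  shows "\<exists>Q\<in>X. (P, Q) \<in> relR A meet join imp \<and> a \<in> Q \<and> b \<notin> Q"
proof -
  have "\<exists>Q \<in> X. (\<forall>x\<in>A. \<forall>y\<in>A. imp x y \<in> P \<and> x \<in> Q \<longrightarrow> y \<in> Q) \<and> a \<in> Q \<and> b \<notin> Q"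
    by (rule R_lemma[where imp=imp]) (use imp_cl imp_refl imp_meet imp_join imp_trans pf_one[OF P] pfD[OF P] a b ab in auto)
  then show ?thesis unfolding relR_def using P by blast
qed

lemma dual_pf:
  assumes Q: "Q \<in> prime_filters A join meet"
  shows "A - Q \<in> X"
proof -
  interpret D: bdl A join meet one zero by unfold_locales (rule dual)
  have d: "D.le x y \<longleftrightarrow> le y x" if "x \<in> A" "y \<in> A" for x y
    unfolding D.le_def le_def using that by (metis absorb1 absorb2 join_comm meet_comm)
  have Q1: "Q \<subseteq> A" "Q \<noteq> {}" "Q \<noteq> A"
    and Qup: "\<And>a b. a \<in> Q \<Longrightarrow> b \<in> A \<Longrightarrow> le b a \<Longrightarrow> b \<in> Q"
    and Qj: "\<And>a b. a \<in> Q \<Longrightarrow> b \<in> Q \<Longrightarrow> join a b \<in> Q"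
    and Qp: "\<And>a b. a \<in> A \<Longrightarrow> b \<in> A \<Longrightarrow> meet a b \<in> Q \<Longrightarrow> a \<in> Q \<or> b \<in> Q"
    using D.pfD[OF Q] d by (blast, blast, blast, metis D.pfD(1,4)[OF Q] d subsetD, blast, blast)
  show ?thesis unfolding prime_filters_def bdl_le_eq
  proof (intro CollectI conjI ballI impI)
    show "A - Q \<subseteq> A" by blast
    show "A - Q \<noteq> {}" using Q1 by blast
    show "A - Q \<noteq> A" using Q1 by blast
    fix x y
    show "x \<in> A - Q \<Longrightarrow> y \<in> A \<Longrightarrow> le x y \<Longrightarrow> y \<in> A - Q" using Qup by blast
    show "x \<in> A - Q \<Longrightarrow> y \<in> A - Q \<Longrightarrow> meet x y \<in> A - Q" using Qp by auto
    show "x \<in> A \<Longrightarrow> y \<in> A \<Longrightarrow> join x y \<in> A - Q \<Longrightarrow> x \<in> A - Q \<or> y \<in> A - Q" using Qj by auto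
  qed
qed

lemma S_ex:
  assumes P: "P \<in> X" and a: "a \<in> A" and c: "c \<in> A" and ac: "coimp a c \<in> P"
  shows "\<exists>Q\<in>X. (P, Q) \<in> relS A meet join coimp \<and> a \<in> Q \<and> c \<notin> Q"
proof -
  interpret D: bdl A join meet one zero by unfold_locales (rule dual)
  have d: "D.le x y \<longleftrightarrow> le y x" if "x \<in> A" "y \<in> A" for x y
    unfolding D.le_def le_def using that by (metis absorb1 absorb2 join_comm meet_comm)
  have tr: "D.le (join (coimp y x) (coimp z y)) (coimp z x)" if "x \<in> A" "y \<in> A" "z \<in> A" for x y z
    using coimp_trans[of z y x] that d[of "join (coimp y x) (coimp z y)" "coimp z x"]
      join_comm[of "coimp y x" "coimp z y"] coimp_cl by simp
  have "\<exists>Q \<in> D.X. (\<forall>x\<in>A. \<forall>y\<in>A. coimp y x \<in> A - P \<and> x \<in> Q \<longrightarrow> y \<in> Q) \<and> c \<in> Q \<and> a \<notin> Q"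
  proof (rule D.R_lemma[where imp="\<lambda>x y. coimp y x"])
    show "zero \<in> A - P" using pf_zero[OF P] by simp
    show "\<And>x y. x \<in> A - P \<Longrightarrow> y \<in> A \<Longrightarrow> D.le x y \<Longrightarrow> y \<in> A - P"
      using d pfD(4)[OF P] by blast
    show "\<And>x y. x \<in> A - P \<Longrightarrow> y \<in> A - P \<Longrightarrow> join x y \<in> A - P"
      using pfD(6)[OF P] by auto
  qed (use coimp_cl coimp_refl coimp_join coimp_meet tr a c ac in auto)
  then obtain Q' where Q': "Q' \<in> prime_filters A join meet"
    and h: "\<forall>x\<in>A. \<forall>y\<in>A. coimp y x \<in> A - P \<and> x \<in> Q' \<longrightarrow> y \<in> Q'" and cQ: "c \<in> Q'" and aQ: "a \<notin> Q'"
    by blast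
  have "A - Q' \<in> X" by (rule dual_pf[OF Q'])
  moreover have "(P, A - Q') \<in> relS A meet join coimp"
    unfolding relS_def using P \<open>A - Q' \<in> X\<close> h coimp_cl by blast
  ultimately show ?thesis using a c cQ aQ by blast
qed

end



context bdl begin

lemma theta_sep:
  assumes eq: "equiv A \<theta>"
    and cm: "\<And>a b c d. (a, b) \<in> \<theta> \<Longrightarrow> (c, d) \<in> \<theta> \<Longrightarrow> (meet a c, meet b d) \<in> \<theta>"
    and cj: "\<And>a b c d. (a, b) \<in> \<theta> \<Longrightarrow> (c, d) \<in> \<theta> \<Longrightarrow> (join a c, join b d) \<in> \<theta>"
    and a: "a \<in> A" and b: "b \<in> A" and nab: "(meet a b, a) \<notin> \<theta>"
  shows "\<exists>Q\<in>X. (\<forall>(x, y)\<in>\<theta>. x \<in> Q \<longrightarrow> y \<in> Q) \<and> a \<in> Q \<and> b \<notin> Q"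
proof -
  have rf: "(x, x) \<in> \<theta>" if "x \<in> A" for x using eq that unfolding equiv_def refl_on_def by blast
  have sy: "(y, x) \<in> \<theta>" if "(x, y) \<in> \<theta>" for x y using eq that unfolding equiv_def sym_def by blast
  have tr: "(x, z) \<in> \<theta>" if "(x, y) \<in> \<theta>" "(y, z) \<in> \<theta>" for x y z
    using eq that unfolding equiv_def trans_def by blast
  have sub: "x \<in> A \<and> y \<in> A" if "(x, y) \<in> \<theta>" for x y using eq that unfolding equiv_def by blast
  define L where "L x y \<longleftrightarrow> (meet x y, x) \<in> \<theta>" for x y
  define im where "im x y = (if L x y then one else zero)" for x y
  have zo: "zero \<noteq> one"
  proof
    assume zo: "zero = one"
    have "x = zero" if "x \<in> A" for x using meet_one[OF that] meet_zero'[OF that] zo by simp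
    then have "a = b" using a b by metis
    then show False using nab rf a meet_idem a by simp
  qed
  have Lmeet: "L x (meet y z) \<longleftrightarrow> L x y \<and> L x z" if xyz: "x \<in> A" "y \<in> A" "z \<in> A" for x y z
  proof
    assume h: "L x (meet y z)"
    have h': "(meet x (meet y z), x) \<in> \<theta>" using h unfolding L_def .
    have "(meet (meet x (meet y z)) y, meet x y) \<in> \<theta>" using cm[OF h' rf[of y]] xyz by simp
    moreover have "meet (meet x (meet y z)) y = meet x (meet y z)"
      using xyz meet_assoc meet_comm meet_idem
      by (metis meet_cl)
    ultimately have "(meet x (meet y z), meet x y) \<in> \<theta>" by simp
    then have 1: "L x y" unfolding L_def using tr sy h' by blast
    have "(meet (meet x (meet y z)) z, meet x z) \<in> \<theta>" using cm[OF h' rf[of z]] xyz by simp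
    moreover have "meet (meet x (meet y z)) z = meet x (meet y z)"
      using xyz meet_assoc meet_idem by simp
    ultimately have "(meet x (meet y z), meet x z) \<in> \<theta>" by simp
    then have 2: "L x z" unfolding L_def using tr sy h' by blast
    show "L x y \<and> L x z" using 1 2 by blast
  next
    assume h: "L x y \<and> L x z"
    have "(meet (meet x y) z, meet x z) \<in> \<theta>" using cm[of "meet x y" x z z] h rf xyz unfolding L_def by blast
    then have "(meet (meet x y) z, x) \<in> \<theta>" using tr h unfolding L_def by blast
    then show "L x (meet y z)" unfolding L_def using meet_assoc xyz by simp
  qed
  have Ljoin: "L (join x y) z \<longleftrightarrow> L x z \<and> L y z" if xyz: "x \<in> A" "y \<in> A" "z \<in> A" for x y z
  proof
    assume h: "L (join x y) z"
    have h': "(meet (join x y) z, join x y) \<in> \<theta>" using h unfolding L_def .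
    have e1: "meet (meet (join x y) z) x = meet x z"
      using xyz meet_assoc[of "join x y" z x] meet_comm[of z x] meet_assoc[of "join x y" x z, symmetric] absorb4[of x y]
      by simp
    have e2: "meet (meet (join x y) z) y = meet y z"
    proof -
      have "meet (meet (join x y) z) y = meet (join x y) (meet z y)" using xyz meet_assoc by simp
      also have "\<dots> = meet (join x y) (meet y z)" using xyz meet_comm by simp
      also have "\<dots> = meet (meet (join x y) y) z" using xyz meet_assoc by simp
      also have "meet (join x y) y = y" using xyz join_comm[of x y] absorb4[of y x] by simp
      finally show ?thesis .
    qed
    have "(meet x z, x) \<in> \<theta>" using cm[OF h' rf[of x]] e1 absorb4[of x y] xyz by simp
    moreover have "(meet y z, y) \<in> \<theta>" using cm[OF h' rf[of y]] e2 xyz join_comm[of x y] absorb4[of y x] by simp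
    ultimately show "L x z \<and> L y z" unfolding L_def by blast
  next
    assume h: "L x z \<and> L y z"
    have "(join (meet x z) (meet y z), join x y) \<in> \<theta>" using cj h unfolding L_def by blast
    moreover have "meet (join x y) z = join (meet x z) (meet y z)"
      using xyz meet_comm[of "join x y" z] distrib[of z x y] meet_comm[of z x] meet_comm[of z y] by simp
    ultimately show "L (join x y) z" unfolding L_def by simp
  qed
  have Ltrans: "L x z" if xyz: "x \<in> A" "y \<in> A" "z \<in> A" and h: "L x y" "L y z" for x y z
  proof -
    have 1: "(meet (meet x y) z, meet x z) \<in> \<theta>" using cm[of "meet x y" x z z] h rf xyz unfolding L_def by blast
    have 2: "(meet x (meet y z), meet x y) \<in> \<theta>" using cm[of x x "meet y z" y] h rf xyz unfolding L_def by blast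
    have "(meet x z, x) \<in> \<theta>" using 1 2 h(1) meet_assoc[OF xyz] sy tr unfolding L_def by metis
    then show ?thesis unfolding L_def .
  qed
  have "\<exists>Q \<in> X. (\<forall>x\<in>A. \<forall>y\<in>A. im x y \<in> {one} \<and> x \<in> Q \<longrightarrow> y \<in> Q) \<and> a \<in> Q \<and> b \<notin> Q"
  proof (rule R_lemma[where imp=im])
    show "\<And>x y. x \<in> A \<Longrightarrow> y \<in> A \<Longrightarrow> im x y \<in> A" unfolding im_def by simp
    show "\<And>x. x \<in> A \<Longrightarrow> im x x = one" unfolding im_def L_def using rf meet_idem by simp
    show "\<And>x y z. x \<in> A \<Longrightarrow> y \<in> A \<Longrightarrow> z \<in> A \<Longrightarrow> im x (meet y z) = meet (im x y) (im x z)"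
      unfolding im_def using Lmeet meet_idem meet_zero meet_zero' by simp
    show "\<And>x y z. x \<in> A \<Longrightarrow> y \<in> A \<Longrightarrow> z \<in> A \<Longrightarrow> im (join x y) z = meet (im x z) (im y z)"
      unfolding im_def using Ljoin meet_idem meet_zero meet_zero' by simp
    show "le (meet (im x y) (im y z)) (im x z)" if xyz: "x \<in> A" "y \<in> A" "z \<in> A" for x y z
    proof (cases "L x y \<and> L y z")
      case True
      then have "L x z" using Ltrans[OF xyz] by blast
      then show ?thesis using True unfolding im_def using meet_idem le_refl by simp
    next
      case False
      then have "meet (im x y) (im y z) = zero" unfolding im_def using meet_zero meet_zero' by auto
      then show ?thesis using le_zero unfolding im_def by simp
    qed
    show "one \<in> {one}" by simp
    show "\<And>x y. x \<in> {one} \<Longrightarrow> y \<in> A \<Longrightarrow> le x y \<Longrightarrow> y \<in> {one}"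
      unfolding le_def using meet_one' by simp
    show "\<And>x y. x \<in> {one} \<Longrightarrow> y \<in> {one} \<Longrightarrow> meet x y \<in> {one}" using meet_idem by simp
    show "{one} \<subseteq> A" by simp
    show "im a b \<notin> {one}" unfolding im_def L_def using nab zo by simp
  qed (use a b in auto)
  then obtain Q where Q: "Q \<in> X" and h: "\<forall>x\<in>A. \<forall>y\<in>A. im x y \<in> {one} \<and> x \<in> Q \<longrightarrow> y \<in> Q"
    and aQ: "a \<in> Q" and bQ: "b \<notin> Q" by blast
  have "y \<in> Q" if "(x, y) \<in> \<theta>" "x \<in> Q" for x y
  proof -
    have "(meet x x, meet x y) \<in> \<theta>" using cm[OF rf that(1)] sub that(1) by blast
    then have "L x y" unfolding L_def using sy meet_idem sub that(1) by simp
    moreover have "x \<in> A" "y \<in> A" using sub[OF that(1)] by auto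
    moreover have "im x y = one" using \<open>L x y\<close> unfolding im_def by simp
    ultimately show ?thesis using h that(2) by blast
  qed
  then show ?thesis using Q aQ bQ by blast
qed

end



context whb begin

abbreviation sg where "sg a \<equiv> sigmaA A meet join a"

lemma sg_sub: "sg a \<subseteq> X" unfolding sigmaA_def by blast
lemma sg_mem: "P \<in> sg a \<longleftrightarrow> P \<in> X \<and> a \<in> P" unfolding sigmaA_def by blast

lemma sg_meet: "a \<in> A \<Longrightarrow> b \<in> A \<Longrightarrow> sg (meet a b) = sg a \<inter> sg b"
  unfolding sigmaA_def using pf_meet by blast
lemma sg_join: "a \<in> A \<Longrightarrow> b \<in> A \<Longrightarrow> sg (join a b) = sg a \<union> sg b"
  unfolding sigmaA_def using pf_join by blast
lemma sg_one: "sg one = X" unfolding sigmaA_def using pf_one by blast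
lemma sg_zero: "sg zero = {}" unfolding sigmaA_def using pf_zero by blast

definition SB where "SB = sg ` A \<union> (\<lambda>a. X - sg a) ` A"

lemma USB: "\<Union>SB = X"
proof
  show "\<Union>SB \<subseteq> X" unfolding SB_def using sg_sub by blast
  have "X - sg zero \<in> SB" unfolding SB_def by simp
  then show "X \<subseteq> \<Union>SB" using sg_zero by auto
qed

lemma tau_eq: "tauA A meet join = topology_generated_by SB"
proof -
  have "tauA A meet join = subtopology (topology_generated_by SB) (topspace (topology_generated_by SB))"
    unfolding tauA_def SB_def[symmetric] using USB by simp
  then show ?thesis by (simp only: subtopology_topspace)
qed

lemma topspace_tau: "topspace (tauA A meet join) = X"
  using tau_eq USB by simp

lemma basic:
  assumes "generate_topology_on SB U"
  shows "\<And>P. P \<in> U \<Longrightarrow> \<exists>a\<in>A. \<exists>b\<in>A. P \<in> sg a - sg b \<and> sg a - sg b \<subseteq> U"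
  using assms
proof (induction rule: generate_topology_on.induct)
  case Empty then show ?case by simp
next
  case (Int U V)
  then obtain a1 b1 a2 b2 where h: "a1 \<in> A" "b1 \<in> A" "P \<in> sg a1 - sg b1" "sg a1 - sg b1 \<subseteq> U"
    "a2 \<in> A" "b2 \<in> A" "P \<in> sg a2 - sg b2" "sg a2 - sg b2 \<subseteq> V" by (meson IntD1 IntD2)
  show ?case
  proof (intro bexI conjI)
    show "P \<in> sg (meet a1 a2) - sg (join b1 b2)" using h sg_meet sg_join by simp
    show "sg (meet a1 a2) - sg (join b1 b2) \<subseteq> U \<inter> V" using h sg_meet sg_join by auto
  qed (use h in auto)
next
  case (UN K)
  then obtain k where "k \<in> K" "P \<in> k" by blast
  then show ?case using UN.IH by blast
next
  case (Basis s)
  then consider c where "c \<in> A" "s = sg c" | c where "c \<in> A" "s = X - sg c" unfolding SB_def by blast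
  then show ?case
  proof cases
    case 1 then show ?thesis using Basis.prems sg_zero by (intro bexI[of _ c] bexI[of _ zero]) auto
  next
    case 2 then show ?thesis using Basis.prems sg_one sg_sub by (intro bexI[of _ one] bexI[of _ c]) auto
  qed
qed

lemma closed_sep:
  assumes Y: "closedin (tauA A meet join) Y" and P: "P \<in> X" "P \<notin> Y"
  shows "\<exists>a\<in>A. \<exists>b\<in>A. P \<in> sg a - sg b \<and> (sg a - sg b) \<inter> Y = {}"
proof -
  have "openin (tauA A meet join) (X - Y)" using Y unfolding closedin_def topspace_tau by blast
  then have "generate_topology_on SB (X - Y)" unfolding tau_eq openin_topology_generated_by_iff .
  then obtain a b where "a \<in> A" "b \<in> A" "P \<in> sg a - sg b" "sg a - sg b \<subseteq> X - Y"
    using basic P by blast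
  then show ?thesis by blast
qed

lemma closed_inv:
  assumes th: "\<theta> \<subseteq> A \<times> A"
  shows "closedin (tauA A meet join) (ThetaInv A meet join \<theta>)"
proof -
  have sub: "ThetaInv A meet join \<theta> \<subseteq> X" unfolding ThetaInv_def by blast
  have eq: "X - ThetaInv A meet join \<theta> = \<Union>((\<lambda>(a, b). sg a \<inter> (X - sg b)) ` \<theta>)"
    unfolding ThetaInv_def sigmaA_def by auto
  have "generate_topology_on SB (\<Union>((\<lambda>(a, b). sg a \<inter> (X - sg b)) ` \<theta>))"
  proof (rule generate_topology_on.UN)
    fix k assume "k \<in> (\<lambda>(a, b). sg a \<inter> (X - sg b)) ` \<theta>"
    then obtain p where p: "p \<in> \<theta>" "k = (\<lambda>(a, b). sg a \<inter> (X - sg b)) p" by blast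
    obtain a b where "p = (a, b)" by fastforce
    then have ab: "(a, b) \<in> \<theta>" "k = sg a \<inter> (X - sg b)" using p by auto
    then have "a \<in> A" "b \<in> A" using th by auto
    then have "sg a \<in> SB" "X - sg b \<in> SB" unfolding SB_def by auto
    then show "generate_topology_on SB k" using ab
      by (simp add: generate_topology_on.Int generate_topology_on.Basis)
  qed
  then have "openin (tauA A meet join) (X - ThetaInv A meet join \<theta>)"
    unfolding tau_eq openin_topology_generated_by_iff eq .
  then show ?thesis unfolding closedin_def topspace_tau using sub by blast
qed

end



context whb begin

abbreviation "TM \<equiv> ThetaMap A meet join"
abbreviation "TI \<equiv> ThetaInv A meet join"
abbreviation "DCs \<equiv> DC A meet join imp coimp"
abbreviation "Cng \<equiv> Con A meet join imp coimp"

lemma DC_sub: "Y \<in> DCs \<Longrightarrow> Y \<subseteq> X"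
  unfolding DC_def using closedin_subset topspace_tau by blast

lemma TM_Con:
  assumes Y: "Y \<in> DCs" shows "TM Y \<in> Cng"
proof -
  have YX: "Y \<subseteq> X" using DC_sub[OF Y] .
  have Rc: "\<And>P Q. P \<in> Y \<Longrightarrow> (P, Q) \<in> relR A meet join imp \<Longrightarrow> Q \<in> Y"
    and Sc: "\<And>P Q. P \<in> Y \<Longrightarrow> (P, Q) \<in> relS A meet join coimp \<Longrightarrow> Q \<in> Y"
    using Y unfolding DC_def by blast+
  have mem: "(a, b) \<in> TM Y \<longleftrightarrow> a \<in> A \<and> b \<in> A \<and> (\<forall>P\<in>Y. a \<in> P \<longleftrightarrow> b \<in> P)" for a b
    unfolding ThetaMap_def sigmaA_def using YX by auto
  have impc: "imp b d \<in> P" if h: "(a, b) \<in> TM Y" "(c, d) \<in> TM Y" "P \<in> Y" "imp a c \<in> P" for a b c d P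
  proof (rule ccontr)
    assume n: "imp b d \<notin> P"
    have abcd: "a \<in> A" "b \<in> A" "c \<in> A" "d \<in> A" using h mem by auto
    obtain Q where Q: "Q \<in> X" "(P, Q) \<in> relR A meet join imp" "b \<in> Q" "d \<notin> Q"
      using R_ex[OF _ abcd(2,4) n] h(3) YX by blast
    have QY: "Q \<in> Y" using Rc[OF h(3) Q(2)] .
    have "a \<in> Q" using mem h(1) QY Q(3) by blast
    then have "c \<in> Q" using Q(2) h(4) abcd unfolding relR_def by blast
    then have "d \<in> Q" using mem h(2) QY by blast
    then show False using Q(4) by blast
  qed
  have coimpc: "coimp b d \<in> P" if h: "(a, b) \<in> TM Y" "(c, d) \<in> TM Y" "P \<in> Y" "coimp a c \<in> P" for a b c d P
  proof -
    have abcd: "a \<in> A" "b \<in> A" "c \<in> A" "d \<in> A" using h mem by auto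
    obtain Q where Q: "Q \<in> X" "(P, Q) \<in> relS A meet join coimp" "a \<in> Q" "c \<notin> Q"
      using S_ex[OF _ abcd(1,3) h(4)] h(3) YX by blast
    have QY: "Q \<in> Y" using Sc[OF h(3) Q(2)] .
    have "b \<in> Q" "d \<notin> Q" using mem h(1,2) QY Q(3,4) by blast+
    then show "coimp b d \<in> P" using Q(2) abcd unfolding relS_def by blast
  qed
  have sym': "(b, a) \<in> TM Y" if "(a, b) \<in> TM Y" for a b using that mem by auto
  show ?thesis unfolding Con_def
  proof (intro CollectI conjI allI impI)
    show "equiv A (TM Y)"
    proof (rule equivI)
      show "TM Y \<subseteq> A \<times> A" unfolding ThetaMap_def by blast
      show "refl_on A (TM Y)" unfolding refl_on_def ThetaMap_def by blast
      show "sym (TM Y)" unfolding sym_def using sym' by blast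
      show "trans (TM Y)" unfolding trans_def ThetaMap_def by auto
    qed
    fix a b c d assume h: "(a, b) \<in> TM Y \<and> (c, d) \<in> TM Y"
    have abcd: "a \<in> A" "b \<in> A" "c \<in> A" "d \<in> A" using h mem by auto
    have hab: "\<And>P. P \<in> Y \<Longrightarrow> a \<in> P \<longleftrightarrow> b \<in> P" and hcd: "\<And>P. P \<in> Y \<Longrightarrow> c \<in> P \<longleftrightarrow> d \<in> P"
      using h unfolding mem by blast+
    have "\<forall>P\<in>Y. meet a c \<in> P \<longleftrightarrow> meet b d \<in> P"
    proof
      fix P assume PY: "P \<in> Y"
      then have PX: "P \<in> X" using YX by blast
      show "meet a c \<in> P \<longleftrightarrow> meet b d \<in> P"
        using pf_meet[OF PX abcd(1,3)] pf_meet[OF PX abcd(2,4)] hab[OF PY] hcd[OF PY] by simp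
    qed
    then show "(meet a c, meet b d) \<in> TM Y" unfolding mem using abcd by simp
    have "\<forall>P\<in>Y. join a c \<in> P \<longleftrightarrow> join b d \<in> P"
    proof
      fix P assume PY: "P \<in> Y"
      then have PX: "P \<in> X" using YX by blast
      show "join a c \<in> P \<longleftrightarrow> join b d \<in> P"
        using pf_join[OF PX abcd(1,3)] pf_join[OF PX abcd(2,4)] hab[OF PY] hcd[OF PY] by simp
    qed
    then show "(join a c, join b d) \<in> TM Y" unfolding mem using abcd by simp
    show "(imp a c, imp b d) \<in> TM Y"
      unfolding mem using abcd imp_cl impc h sym' by blast
    show "(coimp a c, coimp b d) \<in> TM Y"
      unfolding mem using abcd coimp_cl coimpc h sym' by blast
  qed
qed

lemma Con_props:
  assumes th: "\<theta> \<in> Cng"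
  shows "equiv A \<theta>" "\<And>a b c d. (a, b) \<in> \<theta> \<Longrightarrow> (c, d) \<in> \<theta> \<Longrightarrow> (meet a c, meet b d) \<in> \<theta>"
    "\<And>a b c d. (a, b) \<in> \<theta> \<Longrightarrow> (c, d) \<in> \<theta> \<Longrightarrow> (join a c, join b d) \<in> \<theta>"
    "\<And>a b c d. (a, b) \<in> \<theta> \<Longrightarrow> (c, d) \<in> \<theta> \<Longrightarrow> (imp a c, imp b d) \<in> \<theta>"
    "\<And>a b c d. (a, b) \<in> \<theta> \<Longrightarrow> (c, d) \<in> \<theta> \<Longrightarrow> (coimp a c, coimp b d) \<in> \<theta>"
  using th unfolding Con_def by blast+

lemma TI_DC:
  assumes th: "\<theta> \<in> Cng" shows "TI \<theta> \<in> DCs"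
proof -
  note C = Con_props[OF th]
  have sub: "\<theta> \<subseteq> A \<times> A" using C(1) unfolding equiv_def by blast
  have rf: "(x, x) \<in> \<theta>" if "x \<in> A" for x using C(1) that unfolding equiv_def refl_on_def by blast
  have sy: "(y, x) \<in> \<theta>" if "(x, y) \<in> \<theta>" for x y using C(1) that unfolding equiv_def sym_def by blast
  show ?thesis unfolding DC_def
  proof (intro CollectI conjI allI impI)
    show "closedin (tauA A meet join) (TI \<theta>)" using closed_inv[OF sub] .
    fix P Q
    assume h: "P \<in> TI \<theta> \<and> (P, Q) \<in> relR A meet join imp"
    then have P: "P \<in> X" "\<And>a b. (a, b) \<in> \<theta> \<Longrightarrow> a \<in> P \<Longrightarrow> b \<in> P" and Q: "Q \<in> X"
      and R: "\<And>a b. a \<in> A \<Longrightarrow> b \<in> A \<Longrightarrow> imp a b \<in> P \<Longrightarrow> a \<in> Q \<Longrightarrow> b \<in> Q"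
    proof -
      have h1: "P \<in> X \<and> (\<forall>(a, b)\<in>\<theta>. a \<in> P \<longrightarrow> b \<in> P)" using h unfolding ThetaInv_def mem_Collect_eq by blast
      have h2: "P \<in> X \<and> Q \<in> X \<and> (\<forall>a\<in>A. \<forall>b\<in>A. imp a b \<in> P \<and> a \<in> Q \<longrightarrow> b \<in> Q)"
        using h unfolding relR_def mem_Collect_eq prod.case by blast
      show "P \<in> X" "Q \<in> X" using h1 h2 by blast+
      show "\<And>a b. (a, b) \<in> \<theta> \<Longrightarrow> a \<in> P \<Longrightarrow> b \<in> P" using h1 by blast
      show "\<And>a b. a \<in> A \<Longrightarrow> b \<in> A \<Longrightarrow> imp a b \<in> P \<Longrightarrow> a \<in> Q \<Longrightarrow> b \<in> Q" using h2 by blast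
    qed
    show "Q \<in> TI \<theta>" unfolding ThetaInv_def
    proof (intro CollectI conjI Q ballI, clarify)
      fix a b assume ab: "(a, b) \<in> \<theta>" "a \<in> Q"
      have abA: "a \<in> A" "b \<in> A" using ab sub by auto
      have "(imp a b, imp b b) \<in> \<theta>" using C(4)[OF ab(1) rf[OF abA(2)]] .
      then have "(one, imp a b) \<in> \<theta>" using imp_refl[OF abA(2)] sy by simp
      then have "imp a b \<in> P" using P(2) pf_one[OF P(1)] by blast
      then show "b \<in> Q" using R abA ab(2) by blast
    qed
  next
    fix P Q
    assume h: "P \<in> TI \<theta> \<and> (P, Q) \<in> relS A meet join coimp"
    then have P: "P \<in> X" "\<And>a b. (a, b) \<in> \<theta> \<Longrightarrow> a \<in> P \<Longrightarrow> b \<in> P" and Q: "Q \<in> X"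
      and S: "\<And>a b. a \<in> A \<Longrightarrow> b \<in> A \<Longrightarrow> a \<in> Q \<Longrightarrow> b \<notin> Q \<Longrightarrow> coimp a b \<in> P"
    proof -
      have h1: "P \<in> X \<and> (\<forall>(a, b)\<in>\<theta>. a \<in> P \<longrightarrow> b \<in> P)" using h unfolding ThetaInv_def mem_Collect_eq by blast
      have h2: "P \<in> X \<and> Q \<in> X \<and> (\<forall>a\<in>A. \<forall>b\<in>A. a \<in> Q \<and> b \<notin> Q \<longrightarrow> coimp a b \<in> P)"
        using h unfolding relS_def mem_Collect_eq prod.case by blast
      show "P \<in> X" "Q \<in> X" using h1 h2 by blast+
      show "\<And>a b. (a, b) \<in> \<theta> \<Longrightarrow> a \<in> P \<Longrightarrow> b \<in> P" using h1 by blast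
      show "\<And>a b. a \<in> A \<Longrightarrow> b \<in> A \<Longrightarrow> a \<in> Q \<Longrightarrow> b \<notin> Q \<Longrightarrow> coimp a b \<in> P" using h2 by blast
    qed
    show "Q \<in> TI \<theta>" unfolding ThetaInv_def
    proof (intro CollectI conjI Q ballI, clarify, rule ccontr)
      fix a b assume ab: "(a, b) \<in> \<theta>" "a \<in> Q" "b \<notin> Q"
      have abA: "a \<in> A" "b \<in> A" using ab sub by auto
      have "(coimp a b, coimp b b) \<in> \<theta>" using C(5)[OF ab(1) rf[OF abA(2)]] .
      then have "(coimp a b, zero) \<in> \<theta>" using coimp_refl[OF abA(2)] by simp
      moreover have "coimp a b \<in> P" using S abA ab(2,3) by blast
      ultimately have "zero \<in> P" using P(2) by blast
      then show False using pf_zero[OF P(1)] by blast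
    qed
  qed
qed

lemma TM_TI:
  assumes th: "\<theta> \<in> Cng" shows "TM (TI \<theta>) = \<theta>"
proof -
  note C = Con_props[OF th]
  have sub: "\<theta> \<subseteq> A \<times> A" using C(1) unfolding equiv_def by blast
  have sy: "(y, x) \<in> \<theta>" if "(x, y) \<in> \<theta>" for x y using C(1) that unfolding equiv_def sym_def by blast
  have tr: "(x, z) \<in> \<theta>" if "(x, y) \<in> \<theta>" "(y, z) \<in> \<theta>" for x y z
    using C(1) that unfolding equiv_def trans_def by blast
  show ?thesis
  proof
    show "\<theta> \<subseteq> TM (TI \<theta>)"
    proof clarify
      fix a b assume ab: "(a, b) \<in> \<theta>"
      have "sg a \<inter> TI \<theta> = sg b \<inter> TI \<theta>"
        unfolding ThetaInv_def sigmaA_def using ab sy by blast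
      then show "(a, b) \<in> TM (TI \<theta>)" unfolding ThetaMap_def using ab sub by blast
    qed
  next
    show "TM (TI \<theta>) \<subseteq> \<theta>"
    proof clarify
      fix a b assume ab: "(a, b) \<in> TM (TI \<theta>)"
      then have abA: "a \<in> A" "b \<in> A" and eq: "sg a \<inter> TI \<theta> = sg b \<inter> TI \<theta>"
        unfolding ThetaMap_def by auto
      have sep: "False" if xy: "x \<in> A" "y \<in> A" "(meet x y, x) \<notin> \<theta>" "sg x \<inter> TI \<theta> = sg y \<inter> TI \<theta>" for x y
      proof -
        obtain Q where Q: "Q \<in> X" "\<forall>(u, v)\<in>\<theta>. u \<in> Q \<longrightarrow> v \<in> Q" "x \<in> Q" "y \<notin> Q"
          using theta_sep[OF C(1) C(2) C(3) xy(1-3)] by blast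
        have "Q \<in> TI \<theta>" unfolding ThetaInv_def using Q(1,2) by blast
        then have "Q \<in> sg x \<inter> TI \<theta>" using Q(1,3) sg_mem by blast
        then have "Q \<in> sg y" using xy(4) by blast
        then show False using Q(4) sg_mem by blast
      qed
      have 1: "(meet a b, a) \<in> \<theta>" using sep[OF abA(1,2) _ eq] by blast
      have 2: "(meet b a, b) \<in> \<theta>" using sep[OF abA(2,1) _ eq[symmetric]] by blast
      have "(meet a b, b) \<in> \<theta>" using 2 meet_comm[OF abA] by simp
      then show "(a, b) \<in> \<theta>" using 1 sy tr by blast
    qed
  qed
qed

lemma TI_TM:
  assumes Y: "Y \<in> DCs" shows "TI (TM Y) = Y"
proof
  have YX: "Y \<subseteq> X" using DC_sub[OF Y] .
  show "Y \<subseteq> TI (TM Y)"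
    unfolding ThetaInv_def ThetaMap_def sigmaA_def using YX by blast
  show "TI (TM Y) \<subseteq> Y"
  proof
    fix P assume P: "P \<in> TI (TM Y)"
    then have PX: "P \<in> X" and Pc: "\<And>a b. (a, b) \<in> TM Y \<Longrightarrow> a \<in> P \<Longrightarrow> b \<in> P"
      unfolding ThetaInv_def by auto
    show "P \<in> Y"
    proof (rule ccontr)
      assume "P \<notin> Y"
      moreover have "closedin (tauA A meet join) Y" using Y unfolding DC_def by blast
      ultimately obtain a b where ab: "a \<in> A" "b \<in> A" "P \<in> sg a - sg b" "(sg a - sg b) \<inter> Y = {}"
        using closed_sep PX by blast
      have "sg a \<inter> Y = sg (meet a b) \<inter> Y" using ab sg_meet by auto
      then have "(a, meet a b) \<in> TM Y" unfolding ThetaMap_def using ab by simp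
      then have "meet a b \<in> P" using Pc ab(3) sg_mem by blast
      then have "b \<in> P" using pf_meet[OF PX ab(1,2)] by blast
      then show False using ab(3) sg_mem PX by blast
    qed
  qed
qed

end

theorem theorem5p10:
  assumes "whb_algebra A meet join imp coimp zero one"
  shows "bij_betw (ThetaMap A meet join) (DC A meet join imp coimp) (Con A meet join imp coimp)
    \<and> (\<forall>\<theta>\<in>Con A meet join imp coimp.
          ThetaInv A meet join \<theta> \<in> DC A meet join imp coimp
        \<and> ThetaMap A meet join (ThetaInv A meet join \<theta>) = \<theta>)
    \<and> (\<forall>Y\<in>DC A meet join imp coimp. ThetaInv A meet join (ThetaMap A meet join Y) = Y)
    \<and> (\<forall>Y\<in>DC A meet join imp coimp. \<forall>Z\<in>DC A meet join imp coimp.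
          Y \<subseteq> Z \<longleftrightarrow> ThetaMap A meet join Z \<subseteq> ThetaMap A meet join Y)"
proof -
  interpret whb A meet join imp coimp zero one by unfold_locales (rule assms)
  have b: "bij_betw TM DCs Cng"
  proof (rule bij_betwI')
    show "\<And>x y. x \<in> DCs \<Longrightarrow> y \<in> DCs \<Longrightarrow> (TM x = TM y) = (x = y)" using TI_TM by metis
    show "\<And>x. x \<in> DCs \<Longrightarrow> TM x \<in> Cng" using TM_Con by blast
    show "\<And>y. y \<in> Cng \<Longrightarrow> \<exists>x\<in>DCs. y = TM x" using TI_DC TM_TI by metis
  qed
  have o: "Y \<subseteq> Z \<longleftrightarrow> TM Z \<subseteq> TM Y" if Y: "Y \<in> DCs" and Z: "Z \<in> DCs" for Y Z
  proof
    assume "Y \<subseteq> Z" then show "TM Z \<subseteq> TM Y" unfolding ThetaMap_def by blast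
  next
    assume "TM Z \<subseteq> TM Y"
    then have "TI (TM Y) \<subseteq> TI (TM Z)" unfolding ThetaInv_def by blast
    then show "Y \<subseteq> Z" using TI_TM Y Z by simp
  qed
  show ?thesis using b o TI_DC TM_TI TI_TM by blast
qed



end
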